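(* Let $\Omega\subset\mathbb{R}^n$, $\mathcal J=\{1,\dots,n\}$, $k$ a kernel satisfying the standing assumptions in the context, $u\in H_k(\Omega)$, and let $(x_i,\ell_i)$, $e_m$, $P_m$ be produced by the $f$-greedy algorithm as in the context. With $a_i:=|\partial_{\ell_{i+1}}e_i(x_{i+1})|$ and $b_i:=P_i(x_{i+1},\ell_{i+1})$ (and $a_i/b_i:=0$ whenever $b_i=0$), for any $m\ge1$, \[ \left[\prod_{i=m+1}^{2m}\frac{a_i}{b_i}\right]^{1/m}\le m^{-1/2}\,\|e_{m+1}\|_{H_k(\Omega)}. \]
   Context: $k:\Omega\times\Omega\to\mathbb{R}$ is a symmetric positive definite kernel with RKHS $H_k(\Omega)$, $k\in C^2(\Omega\times\Omega)$, and for all $x\in\Omega$, $\ell\in\mathcal J$, $\partial^{(2)}_\ell k(\cdot,x)\in H_k(\Omega)$ (derivative in the second argument) with $\partial_\ell f(x)=\langle f,\partial^{(2)}_\ell k(\cdot,x)\rangle_{H_k(\Omega)}$ for all $f\in H_k(\Omega)$. For a selection $\{(x_i,\ell_i)\}_{i=1}^m\subset\Omega\times\mathcal J$, $V_m:=\operatorname{span}\{\partial^{(2)}_{\ell_i}k(\cdot,x_i)\}_{i=1}^m$ ($V_0=\{0\}$), $\Pi_m$ is the orthogonal projector onto $V_m$, $s_m:=\Pi_mu$, $e_m:=u-s_m$. The $f$-greedy algorithm starts at $m=0$ and for $m\ge0$ chooses $(x_{m+1},\ell_{m+1})\in\operatorname{argmax}_{x\in\Omega,\ell\in\mathcal J}|\partial_\ell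 e_m(x)|$. Power function: $P_m(x,\ell):=\|(I-\Pi_m)\partial^{(2)}_\ell k(\cdot,x)\|_{H_k(\Omega)}$. *)

theory Defs
  imports "HOL-Analysis.Analysis"
begin

definition partial_der :: "(real^'n \<Rightarrow> real) \<Rightarrow> real^'n \<Rightarrow> 'n \<Rightarrow> real" where
  "partial_der f x l = deriv (\<lambda>t. f (x + t *\<^sub>R axis l 1)) 0"

definition orth_proj :: "'h::real_inner set \<Rightarrow> 'h \<Rightarrow> 'h" where
  "orth_proj V u = (THE p. p \<in> V \<and> (\<forall>v\<in>V. inner (u - p) v = 0))"

end

theory Submission
  imports Defs
begin

lemma orth_span:
  fixes z :: "'h::real_inner"
  assumes "\<And>s. s \<in> S \<Longrightarrow> inner z s = 0" and "v \<in> span S"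
  shows "inner z v = 0"
  using assms orthogonal_to_span unfolding orthogonal_def by blast

lemma proj_exists:
  fixes u :: "'h::real_inner"
  assumes "finite S"
  shows "\<exists>p\<in>span S. \<forall>v\<in>span S. inner (u - p) v = 0"
  using assms
proof (induction S arbitrary: u)
  case empty
  show ?case by (intro bexI[of _ 0]) auto
next
  case (insert d S)
  obtain p where p: "p \<in> span S" "\<forall>v\<in>span S. inner (u - p) v = 0"
    using insert.IH by blast
  obtain q where q: "q \<in> span S" "\<forall>v\<in>span S. inner (d - q) v = 0"
    using insert.IH by blast
  define w where "w = d - q"
  define c where "c = inner (u - p) w / inner w w"
  have wS: "\<forall>v\<in>span S. inner w v = 0" using q w_def by simp
  have Eq: "inner (u - p) q = 0" using p q by simp
  have "inner (u - (p + c *\<^sub>R w)) s = 0" if "s \<in> insert d S" for s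
  proof (cases "s = d")
    case True
    have dq: "d = q + w" using w_def by simp
    have "inner (u - (p + c *\<^sub>R w)) d = inner (u - p) q - c * inner w q + inner (u - p) w - c * inner w w"
      by (simp add: dq inner_diff_left inner_add_right inner_add_left algebra_simps)
    also have "\<dots> = inner (u - p) w - c * inner w w"
      using Eq wS q by simp
    also have "\<dots> = 0"
      by (cases "w = 0") (auto simp: c_def)
    finally show ?thesis using True by simp
  next
    case False
    then have "s \<in> span S" using that by (simp add: span_base)
    then show ?thesis using p wS by (simp add: inner_diff_left inner_add_left)
  qed
  then have "\<forall>v\<in>span (insert d S). inner (u - (p + c *\<^sub>R w)) v = 0"
    using orth_span by blast
  moreover have "p + c *\<^sub>R w \<in> span (insert d S)"
    using p q unfolding w_def
    by (meson insert_subset span_add span_diff span_mono span_mul span_superset subset_iff subset_insertI)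
  ultimately show ?case by blast
qed

lemma proj_char:
  fixes u :: "'h::real_inner"
  assumes "finite S"
  shows "orth_proj (span S) u \<in> span S \<and> (\<forall>v\<in>span S. inner (u - orth_proj (span S) u) v = 0)"
proof -
  have "\<exists>!p. p \<in> span S \<and> (\<forall>v\<in>span S. inner (u - p) v = 0)"
  proof (rule ex_ex1I)
    show "\<exists>p. p \<in> span S \<and> (\<forall>v\<in>span S. inner (u - p) v = 0)"
      using proj_exists[OF assms] by blast
  next
    fix p q assume p: "p \<in> span S \<and> (\<forall>v\<in>span S. inner (u - p) v = 0)"
      and q: "q \<in> span S \<and> (\<forall>v\<in>span S. inner (u - q) v = 0)"
    have pq: "p - q \<in> span S" using p q by (simp add: span_diff)
    have "inner (u - q) (p - q) - inner (u - p) (p - q) = 0" using p q pq by simp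
    then have "inner (p - q) (p - q) = 0" by (simp add: inner_diff_left algebra_simps)
    then show "p = q" by simp
  qed
  then show ?thesis unfolding orth_proj_def by (rule theI')
qed

lemma proj_eq:
  fixes u :: "'h::real_inner"
  assumes "finite S" "p \<in> span S" "\<forall>v\<in>span S. inner (u - p) v = 0"
  shows "orth_proj (span S) u = p"
proof -
  let ?q = "orth_proj (span S) u"
  have q: "?q \<in> span S" "\<forall>v\<in>span S. inner (u - ?q) v = 0" using proj_char[OF assms(1)] by auto
  have pq: "p - ?q \<in> span S" using assms q by (simp add: span_diff)
  have "inner (u - ?q) (p - ?q) - inner (u - p) (p - ?q) = 0" using assms q pq by simp
  then have "inner (p - ?q) (p - ?q) = 0" by (simp add: inner_diff_left algebra_simps)
  then show ?thesis by simp
qed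

lemma step:
  fixes u d :: "'h::real_inner"
  assumes S: "finite S"
  defines "E \<equiv> u - orth_proj (span S) u"
    and "E' \<equiv> u - orth_proj (span (insert d S)) u"
    and "w \<equiv> d - orth_proj (span S) d"
  shows "(norm E')\<^sup>2 + (\<bar>inner E d\<bar> / norm w)\<^sup>2 = (norm E)\<^sup>2"
proof -
  let ?P = "orth_proj (span S) u"
  let ?Q = "orth_proj (span S) d"
  have P: "?P \<in> span S" "\<forall>v\<in>span S. inner E v = 0" using proj_char[OF S, of u] E_def by auto
  have Q: "?Q \<in> span S" "\<forall>v\<in>span S. inner w v = 0" using proj_char[OF S, of d] w_def by auto
  define c where "c = inner E w / inner w w"
  have Ew: "inner E w = inner E d" using P Q by (simp add: w_def inner_diff_right)
  have "inner (E - c *\<^sub>R w) s = 0" if "s \<in> insert d S" for s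
  proof (cases "s = d")
    case True
    have dq: "d = ?Q + w" using w_def by simp
    have "inner (E - c *\<^sub>R w) d = inner E ?Q - c * inner w ?Q + inner E w - c * inner w w"
      by (subst dq) (simp add: inner_diff_left inner_add_right algebra_simps)
    also have "\<dots> = inner E w - c * inner w w"
      using P Q by simp
    also have "\<dots> = 0"
      by (cases "w = 0") (auto simp: c_def)
    finally show ?thesis using True by simp
  next
    case False
    then have "s \<in> span S" using that by (simp add: span_base)
    then show ?thesis using P Q by (simp add: inner_diff_left)
  qed
  then have orth: "\<forall>v\<in>span (insert d S). inner (u - (?P + c *\<^sub>R w)) v = 0"
    using orth_span[of "insert d S" "E - c *\<^sub>R w"] by (simp add: E_def algebra_simps)
  have mem: "?P + c *\<^sub>R w \<in> span (insert d S)"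
    using P Q unfolding w_def
    by (meson insert_subset span_add span_diff span_mono span_mul span_superset subset_iff subset_insertI)
  have "orth_proj (span (insert d S)) u = ?P + c *\<^sub>R w"
    using proj_eq[OF _ mem orth] S by simp
  then have E'eq: "E' = E - c *\<^sub>R w" by (simp add: E'_def E_def)
  have "(norm E')\<^sup>2 = inner E E - 2 * c * inner E w + c * c * inner w w"
    by (simp add: E'eq power2_norm_eq_inner inner_diff_left inner_diff_right inner_commute algebra_simps)
  also have "\<dots> = (norm E)\<^sup>2 - (inner E d)\<^sup>2 / (norm w)\<^sup>2"
    by (cases "w = 0") (auto simp: c_def Ew power2_norm_eq_inner[symmetric] power2_eq_square field_simps)
  finally show ?thesis by (simp add: power_divide)
qed

theorem lemma3:
  fixes \<Omega> :: "(real^'n) set"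
    and k :: "real^'n \<Rightarrow> real^'n \<Rightarrow> real"
    and ev :: "'h::{real_inner, complete_space} \<Rightarrow> real^'n \<Rightarrow> real"
    and K :: "real^'n \<Rightarrow> 'h"
    and dK :: "real^'n \<Rightarrow> 'n \<Rightarrow> 'h"
    and u :: 'h
    and x :: "nat \<Rightarrow> real^'n"
    and l :: "nat \<Rightarrow> 'n"
    and V :: "nat \<Rightarrow> 'h set"
    and e :: "nat \<Rightarrow> 'h"
    and P :: "nat \<Rightarrow> real^'n \<Rightarrow> 'n \<Rightarrow> real"
    and a b :: "nat \<Rightarrow> real"
    and m :: nat
  assumes \<Omega>_open: "open \<Omega>"
    and k_sym: "\<And>y z. y \<in> \<Omega> \<Longrightarrow> z \<in> \<Omega> \<Longrightarrow> k y z = k z y"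
    and k_pd: "\<And>X c. finite X \<Longrightarrow> X \<subseteq> \<Omega> \<Longrightarrow> (\<exists>y\<in>X. c y \<noteq> 0) \<Longrightarrow>
                 (\<Sum>y\<in>X. \<Sum>z\<in>X. c y * c z * k y z) > 0"
    and K_eval: "\<And>y z. y \<in> \<Omega> \<Longrightarrow> z \<in> \<Omega> \<Longrightarrow> ev (K y) z = k z y"
    and reproducing: "\<And>f y. y \<in> \<Omega> \<Longrightarrow> ev f y = inner f (K y)"
    and dense: "closure (span (K ` \<Omega>)) = UNIV"
    and dK_eval: "\<And>y z j. y \<in> \<Omega> \<Longrightarrow> z \<in> \<Omega> \<Longrightarrow> ev (dK y j) z = partial_der (k z) y j"
    and deriv_reproducing: "\<And>f y j. y \<in> \<Omega> \<Longrightarrow>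
          ((\<lambda>t. ev f (y + t *\<^sub>R axis j 1)) has_real_derivative inner f (dK y j)) (at 0)"
    and V_def: "\<And>i. V i = span {dK (x p) (l p) | p. 1 \<le> p \<and> p \<le> i}"
    and e_def: "\<And>i. e i = u - orth_proj (V i) u"
    and P_def: "\<And>i y j. P i y j = norm (dK y j - orth_proj (V i) (dK y j))"
    and greedy_in: "\<And>i. x (Suc i) \<in> \<Omega>"
    and greedy_max: "\<And>i y j. y \<in> \<Omega> \<Longrightarrow>
          \<bar>partial_der (ev (e i)) y j\<bar> \<le> \<bar>partial_der (ev (e i)) (x (Suc i)) (l (Suc i))\<bar>"
    and a_def: "\<And>i. a i = \<bar>partial_der (ev (e i)) (x (Suc i)) (l (Suc i))\<bar>"
    and b_def: "\<And>i. b i = P i (x (Suc i)) (l (Suc i))"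
    and m_pos: "m \<ge> 1"
  shows "(\<Prod>i = m + 1..2 * m. (if b i = 0 then 0 else a i / b i)) powr (1 / real m)
           \<le> real m powr (-1/2) * norm (e (m + 1))"
proof -
  define S where "S i = {dK (x p) (l p) | p. 1 \<le> p \<and> p \<le> i}" for i
  have Sfin: "finite (S i)" for i
  proof -
    have "S i = (\<lambda>p. dK (x p) (l p)) ` {1..i}" by (auto simp: S_def)
    then show ?thesis by simp
  qed
  have Ssuc: "S (Suc i) = insert (dK (x (Suc i)) (l (Suc i))) (S i)" for i
    by (auto simp: S_def le_Suc_eq)
  have VS: "V i = span (S i)" for i using V_def S_def by simp
  have pd: "partial_der (ev f) y j = inner f (dK y j)" if "y \<in> \<Omega>" for f y j
    unfolding partial_der_def using deriv_reproducing[OF that] by (rule DERIV_imp_deriv)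
  define c where "c i = (if b i = 0 then 0 else a i / b i)" for i
  have c_nn: "c i \<ge> 0" for i
    using a_def b_def P_def c_def by simp
  have key: "(norm (e (Suc i)))\<^sup>2 + (c i)\<^sup>2 = (norm (e i))\<^sup>2" for i
  proof -
    have "c i = a i / b i" by (simp add: c_def)
    also have "\<dots> = \<bar>inner (e i) (dK (x (Suc i)) (l (Suc i)))\<bar> /
        norm (dK (x (Suc i)) (l (Suc i)) - orth_proj (span (S i)) (dK (x (Suc i)) (l (Suc i))))"
      using a_def b_def P_def pd[OF greedy_in] VS by simp
    finally have ci: "c i = \<dots>" .
    show ?thesis
      using step[OF Sfin[of i], of u "dK (x (Suc i)) (l (Suc i))"]
      unfolding ci e_def VS Ssuc by simp
  qed
  have tel: "(\<Sum>i\<in>{n..<n+k}. (c i)\<^sup>2) = (norm (e n))\<^sup>2 - (norm (e (n+k)))\<^sup>2" for n k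
  proof (induction k)
    case 0 then show ?case by simp
  next
    case (Suc k)
    have "(\<Sum>i\<in>{n..<n+Suc k}. (c i)\<^sup>2) = (\<Sum>i\<in>{n..<n+k}. (c i)\<^sup>2) + (c (n+k))\<^sup>2"
      by simp
    then show ?case using Suc key[of "n+k"] by simp
  qed
  define I where "I = {m+1..2*m}"
  have I_eq: "I = {m+1..<(m+1)+m}" unfolding I_def by auto
  have cardI: "card I = m" unfolding I_eq by simp
  have Ine: "I \<noteq> {}" using m_pos unfolding I_def by auto
  have sumI: "(\<Sum>i\<in>I. (c i)\<^sup>2) \<le> (norm (e (m+1)))\<^sup>2"
    unfolding I_eq tel by simp
  have am: "(\<Sum>i\<in>I. (c i)\<^sup>2 / card I) \<ge> (\<Prod>i\<in>I. (c i)\<^sup>2) powr (1 / card I)"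
    by (rule arith_geom_mean) (use m_pos in \<open>auto simp: I_def\<close>)
  have "(\<Sum>i\<in>I. (c i)\<^sup>2 / card I) = (\<Sum>i\<in>I. (c i)\<^sup>2) / m"
    by (simp add: cardI sum_divide_distrib)
  also have "\<dots> \<le> (norm (e (m+1)))\<^sup>2 / m"
    using sumI by (simp add: divide_right_mono)
  finally have G2: "(\<Prod>i\<in>I. (c i)\<^sup>2) powr (1 / m) \<le> (norm (e (m+1)))\<^sup>2 / m"
    using am cardI by simp
  define Pr where "Pr = (\<Prod>i\<in>I. c i)"
  have Pr_nn: "Pr \<ge> 0" unfolding Pr_def using c_nn by (simp add: prod_nonneg)
  have "(\<Prod>i\<in>I. (c i)\<^sup>2) = Pr * Pr" unfolding Pr_def by (simp add: power2_eq_square prod.distrib)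
  then have "(\<Prod>i\<in>I. (c i)\<^sup>2) powr (1 / m) = (Pr powr (1/m))\<^sup>2"
    using Pr_nn by (simp add: powr_mult power2_eq_square)
  with G2 have G3: "(Pr powr (1/m))\<^sup>2 \<le> (norm (e (m+1)))\<^sup>2 / m" by simp
  have mm: "(real m powr (-1/2))\<^sup>2 = 1 / m"
    using m_pos by (simp add: power2_eq_square powr_add[symmetric] powr_minus_divide)
  have "(Pr powr (1/m))\<^sup>2 \<le> (real m powr (-1/2) * norm (e (m + 1)))\<^sup>2"
    using G3 mm by (simp add: power_mult_distrib)
  then have "Pr powr (1/m) \<le> real m powr (-1/2) * norm (e (m + 1))"
    by (rule power2_le_imp_le) simp
  then show ?thesis unfolding Pr_def I_def c_def .
qed

end
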